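(* Let $\delta\in L^2(X,\mu)$ and $k\ge1$. For $r\in\widehat X$ define $M^{(k)}(r)=\prod_{0\le\ell<k}M\big(P_{2\mathbf{q}}^{\ell}(r)\big)$. Then for every $s\in\widehat X$, \[ \widehat{(\mathcal{L}^k\delta)}(s)=\sum_{r\in P_{2\mathbf{q}}^{-k}(s)}M^{(k)}(r)\,\hat\delta(r), \] where $P_{2\mathbf{q}}^{-k}(s)=\{r\in\widehat X: P_{2\mathbf{q}}^k(r)=s\}$ (a finite set).
   Context: $X=\mathbb{Z}_2$ is the ring of $2$-adic integers, realized as $\{(x_n)_{n\ge0}\in\prod_n\mathbb{Z}/2^n\mathbb{Z}: x_{n+1}\equiv x_n \pmod{2^n}\}$ with coordinatewise operations and projections $\pi_n(\mathbf{x})=x_n$; $\mu$ is its normalized Haar measure. $\widehat X=\mathbb{Q}[1/2]/\mathbb{Z}$. For $\mathbf{x}\in X$, $P_{\mathbf{x}}:\widehat X\to\widehat X$ is $P_{\mathbf{x}}(\frac{a}{2^n}+\mathbb{Z})=\frac{\pi_n(\mathbf{x})a}{2^n}+\mathbb{Z}$. With $e(\alpha)=\exp(2\pi i\alpha)$, the characters are $\chi_r(\mathbf{x})=e(P_{\mathbf{x}}(r))$ for $r\in\widehat X$; they form an orthonormal basis of $L^2(X,\mu)$, and $\hat\delta(r)=\int_X\delta(\mathbf{x})\overline{\chi_r(\mathbf{x})}\,d\mu(\mathbf{x})$ is the Fourier coefficient, so $\delta=\sum_r\hat\delta(r)\chi_r$. Let $\mathbf{3}=(3)_{n\ge0}$,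 $\mathbf{2}=(2)_{n\ge0}\in X$, and let $\mathbf{q}\in X$ be the multiplicative inverse of $\mathbf{3}$; write $2\mathbf{q}=\mathbf{2}\mathbf{q}$. The operator $\mathcal{L}$ acts on functions $\delta:X\to\mathbb{C}$ by $(\mathcal{L}\delta)(\mathbf{x})=\sum_{j=0}^{2}c_j\,\delta(2\mathbf{q}\mathbf{x}-j\mathbf{q})$ with $c_0=c_2=1/3$, $c_1=-1/3$. Finally $M(r)=\sum_{j=0}^2c_j\chi_r(-j\mathbf{q})=\frac13\big(1-e(-P_{\mathbf{q}}(r))+e(-2P_{\mathbf{q}}(r))\big)$. *)

theory Defs
  imports "HOL-Probability.Probability"
begin

section \<open>The 2-adic integers as compatible sequences\<close>

type_synonym z2 = "nat \<Rightarrow> int"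

definition Z2 :: "z2 set" where
  "Z2 = {x. (\<forall>n. 0 \<le> x n \<and> x n < 2 ^ n) \<and> (\<forall>n. x (Suc n) mod 2 ^ n = x n)}"

definition z2_const :: "int \<Rightarrow> z2" where
  "z2_const c = (\<lambda>n. c mod 2 ^ n)"

definition z2_add :: "z2 \<Rightarrow> z2 \<Rightarrow> z2" where
  "z2_add x y = (\<lambda>n. (x n + y n) mod 2 ^ n)"

definition z2_mul :: "z2 \<Rightarrow> z2 \<Rightarrow> z2" where
  "z2_mul x y = (\<lambda>n. (x n * y n) mod 2 ^ n)"

definition z2_neg :: "z2 \<Rightarrow> z2" where
  "z2_neg x = (\<lambda>n. (- x n) mod 2 ^ n)"

definition z2_sub :: "z2 \<Rightarrow> z2 \<Rightarrow> z2" where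
  "z2_sub x y = (\<lambda>n. (x n - y n) mod 2 ^ n)"

definition z2_three :: z2 where "z2_three = z2_const 3"
definition z2_two :: z2 where "z2_two = z2_const 2"

definition z2_q :: z2 where
  "z2_q = (THE y. y \<in> Z2 \<and> z2_mul z2_three y = z2_const 1)"

definition z2_2q :: z2 where "z2_2q = z2_mul z2_two z2_q"

text \<open>Normalized Haar measure: image of the fair coin-flip product measure under
  binary expansion (b_i) \<mapsto> (sum_{i<n} b_i 2^i)_n.\<close>
definition coin_flips :: "(nat \<Rightarrow> bool) measure" where
  "coin_flips = PiM UNIV (\<lambda>_. measure_pmf (pmf_of_set {False, True}))"

definition bits_to_z2 :: "(nat \<Rightarrow> bool) \<Rightarrow> z2" where
  "bits_to_z2 b = (\<lambda>n. \<Sum>i<n. if b i then 2 ^ i else 0)"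

definition haar :: "z2 measure" where
  "haar = distr coin_flips (PiM UNIV (\<lambda>_. count_space UNIV)) bits_to_z2"

section \<open>Dual group Q[1/2]/Z, represented by dyadic rationals in [0,1)\<close>

definition Xhat :: "rat set" where
  "Xhat = {r. 0 \<le> r \<and> r < 1 \<and> (\<exists>n::nat. r * 2 ^ n \<in> \<int>)}"

definition dyad_level :: "rat \<Rightarrow> nat" where
  "dyad_level r = (LEAST n. r * 2 ^ n \<in> \<int>)"

text \<open>P_x(a/2^n + Z) = pi_n(x) a / 2^n + Z\<close>
definition Pmap :: "z2 \<Rightarrow> rat \<Rightarrow> rat" where
  "Pmap x r = frac (of_int (x (dyad_level r)) * r)"

definition e :: "real \<Rightarrow> complex" where
  "e a = exp (2 * of_real pi * \<i> * of_real a)"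

definition chi :: "rat \<Rightarrow> z2 \<Rightarrow> complex" where
  "chi r x = e (of_rat (Pmap x r))"

definition fourier :: "(z2 \<Rightarrow> complex) \<Rightarrow> rat \<Rightarrow> complex" where
  "fourier \<delta> r = integral\<^sup>L haar (\<lambda>x. \<delta> x * cnj (chi r x))"

definition coef :: "nat \<Rightarrow> complex" where
  "coef j = (if j = 1 then - 1 / 3 else 1 / 3)"

definition Lop :: "(z2 \<Rightarrow> complex) \<Rightarrow> (z2 \<Rightarrow> complex)" where
  "Lop \<delta> x = (\<Sum>j<3. coef j * \<delta> (z2_sub (z2_mul z2_2q x) (z2_mul (z2_const (int j)) z2_q)))"

definition Mfun :: "rat \<Rightarrow> complex" where
  "Mfun r = (\<Sum>j<3. coef j * chi r (z2_neg (z2_mul (z2_const (int j)) z2_q)))"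

definition Mk :: "nat \<Rightarrow> rat \<Rightarrow> complex" where
  "Mk k r = (\<Prod>l<k. Mfun ((Pmap z2_2q ^^ l) r))"

end

theory Submission
  imports Defs
begin

abbreviation MZ where "MZ \<equiv> PiM UNIV (\<lambda>_::nat. count_space (UNIV::int set))"
lemma space_MZ[simp]: "space MZ = UNIV" by (simp add: space_PiM)
lemma space_haar[simp]: "space haar = UNIV" by (simp add: haar_def)
lemma sets_haar[simp]: "sets haar = sets MZ" by (simp add: haar_def)

lemma Z2_D: "x \<in> Z2 \<Longrightarrow> 0 \<le> x n \<and> x n < 2 ^ n" by (simp add: Z2_def)
lemma Z2_mod: "x \<in> Z2 \<Longrightarrow> x n mod 2 ^ n = x n" using Z2_D[of x n] by simp
lemma Z2_le: "x \<in> Z2 \<Longrightarrow> i \<le> N \<Longrightarrow> x N mod 2 ^ i = x i"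
proof (induction N)
  case 0 then show ?case using Z2_mod[OF 0(1), of 0] by simp
next
  case (Suc N)
  show ?case
  proof (cases "i = Suc N")
    case True then show ?thesis using Z2_mod[OF Suc.prems(1), of i] by simp
  next
    case False
    then have "i \<le> N" using Suc by simp
    have "x (Suc N) mod 2 ^ i = (x (Suc N) mod 2 ^ N) mod 2 ^ i"
      using \<open>i \<le> N\<close> by (simp add: mod_mod_cancel le_imp_power_dvd)
    also have "\<dots> = x N mod 2 ^ i" using Suc(2) by (simp add: Z2_def)
    finally show ?thesis using Suc \<open>i \<le> N\<close> by simp
  qed
qed

lemma Z2_I: "(\<And>n. x n = y n mod 2 ^ n) \<Longrightarrow> (\<And>n. y (Suc n) mod 2 ^ n = y n mod 2 ^ n) \<Longrightarrow> x \<in> Z2"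
  unfolding Z2_def
  by (auto simp: mod_mod_cancel le_imp_power_dvd)

lemma Z2_suc: "x \<in> Z2 \<Longrightarrow> x (Suc n) mod 2 ^ n = x n" by (simp add: Z2_def)

lemma z2_const_Z2[simp]: "z2_const c \<in> Z2"
  by (rule Z2_I[where y="\<lambda>_. c"]) (auto simp: z2_const_def)

lemma z2_mul_Z2[simp]: "x \<in> Z2 \<Longrightarrow> y \<in> Z2 \<Longrightarrow> z2_mul x y \<in> Z2"
  apply (rule Z2_I[where y="\<lambda>n. x n * y n"])
   apply (simp add: z2_mul_def)
  by (metis Z2_suc mod_mult_eq)

lemma z2_sub_Z2[simp]: "x \<in> Z2 \<Longrightarrow> y \<in> Z2 \<Longrightarrow> z2_sub x y \<in> Z2"
  apply (rule Z2_I[where y="\<lambda>n. x n - y n"])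
   apply (simp add: z2_sub_def)
  by (metis Z2_suc mod_diff_eq)

lemma z2_neg_Z2[simp]: "x \<in> Z2 \<Longrightarrow> z2_neg x \<in> Z2"
  apply (rule Z2_I[where y="\<lambda>n. - x n"])
   apply (simp add: z2_neg_def)
  by (metis Z2_suc mod_minus_eq)

lemma four_pow_mod3: "3 * ((1 - 4 ^ n) div 3) = (1 - 4 ^ n :: int)"
proof -
  have "(3::int) dvd (4 ^ n - 1)"
  proof (induction n)
    case (Suc n)
    have "(4::int) ^ Suc n - 1 = 4 * (4 ^ n - 1) + 3" by simp
    then show ?case using Suc by presburger
  qed simp
  then have "(3::int) dvd (1 - 4 ^ n)" by (metis dvd_minus_iff minus_diff_eq)
  then show ?thesis by simp
qed

lemma q_exists: "\<exists>y. y \<in> Z2 \<and> z2_mul z2_three y = z2_const 1"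
proof -
  define w where "w n = (1 - 4 ^ n) div (3::int)" for n
  have w3: "3 * w n = 1 - 4 ^ n" for n using four_pow_mod3 w_def by simp
  have wS: "w (Suc n) = w n - 4 ^ n" for n using w3[of n] w3[of "Suc n"] by simp
  have d: "(2::int) ^ n dvd 4 ^ n" for n
    by (metis dvd_triv_left power_mult_distrib num_double numeral_times_numeral mult.commute dvd_power_same)
  define y where "y n = w n mod 2 ^ n" for n
  have "y \<in> Z2"
  proof (rule Z2_I[where y=w])
    show "y n = w n mod 2 ^ n" for n by (simp add: y_def)
    show "w (Suc n) mod 2 ^ n = w n mod 2 ^ n" for n
      using d[of n] by (simp add: wS mod_eq_dvd_iff)
  qed
  moreover have "z2_mul z2_three y = z2_const 1"
  proof
    fix n
    have "(3 mod 2 ^ n * y n) mod 2 ^ n = (3 * w n) mod 2 ^ n"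
      by (simp add: y_def mod_mult_eq)
    also have "\<dots> = 1 mod 2 ^ n"
    proof -
      have "3 * w n - 1 = - (4 ^ n)" using w3[of n] by simp
      then have "(2::int) ^ n dvd 3 * w n - 1" using d[of n] by simp
      then show ?thesis by (simp only: mod_eq_dvd_iff)
    qed
    finally show "z2_mul z2_three y n = z2_const 1 n"
      by (simp add: z2_mul_def z2_three_def z2_const_def)
  qed
  ultimately show ?thesis by blast
qed

lemma q_unique:
  assumes "y \<in> Z2" "z2_mul z2_three y = z2_const 1" "y' \<in> Z2" "z2_mul z2_three y' = z2_const 1"
  shows "y = y'"
proof
  fix n
  have "(3 * y n) mod 2 ^ n = (3 * y' n) mod 2 ^ n"
    using fun_cong[OF assms(2), of n] fun_cong[OF assms(4), of n]
    by (simp add: z2_mul_def z2_three_def z2_const_def mod_mult_left_eq)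
  then have "(2::int) ^ n dvd 3 * (y n - y' n)"
    by (simp add: mod_eq_dvd_iff right_diff_distrib)
  moreover have "coprime ((2::int) ^ n) 3" by simp
  ultimately have dv: "(2::int) ^ n dvd (y n - y' n)"
    using coprime_dvd_mult_right_iff by blast
  have "\<bar>y n - y' n\<bar> < 2 ^ n" using Z2_D[OF assms(1), of n] Z2_D[OF assms(3), of n] by auto
  moreover have "y n - y' n = 0"
  proof (rule ccontr)
    assume "y n - y' n \<noteq> 0"
    then have "\<bar>(2::int) ^ n\<bar> \<le> \<bar>y n - y' n\<bar>" using dv by (rule dvd_imp_le_int)
    then show False using \<open>\<bar>y n - y' n\<bar> < 2 ^ n\<close> by simp
  qed
  then show "y n = y' n" by simp
qed

lemma q_props: "z2_q \<in> Z2" "z2_mul z2_three z2_q = z2_const 1"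
proof -
  have "z2_q \<in> Z2 \<and> z2_mul z2_three z2_q = z2_const 1"
    unfolding z2_q_def
    apply (rule theI'[of "\<lambda>y. y \<in> Z2 \<and> z2_mul z2_three y = z2_const 1"])
    using q_exists q_unique by blast
  then show "z2_q \<in> Z2" "z2_mul z2_three z2_q = z2_const 1" by auto
qed

lemma q_Z2[simp]: "z2_q \<in> Z2" using q_props by simp

lemma q3: "(3 * z2_q n) mod 2 ^ n = 1 mod 2 ^ n"
  using fun_cong[OF q_props(2), of n]
  by (simp add: z2_mul_def z2_three_def z2_const_def mod_mult_left_eq)

lemma q3_ex: "\<exists>t. 3 * z2_q n = 1 + 2 ^ n * t"
proof -
  have "(2::int) ^ n dvd 3 * z2_q n - 1" using mod_eq_dvd_iff[THEN iffD1, OF q3[of n]] .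
  then obtain t where "3 * z2_q n - 1 = 2 ^ n * t" by (auto elim!: dvdE)
  then show ?thesis by (intro exI[of _ t]) simp
qed

lemma q2_Z2[simp]: "z2_2q \<in> Z2" by (simp add: z2_2q_def z2_two_def)

lemma q2_val: "z2_2q n mod 2 ^ n = (2 * z2_q n) mod 2 ^ n"
  by (simp add: z2_2q_def z2_two_def z2_mul_def z2_const_def mod_mult_left_eq)


definition er :: "rat \<Rightarrow> complex" where "er q = e (of_rat q)"

lemma e_add: "e (a + b) = e a * e b"
  by (simp add: e_def distrib_left exp_add)

lemma e_int: "e (of_int k) = 1"
proof -
  have "e (of_int k) = exp (complex_of_real (2 * of_int k * pi) * \<i>)"
    by (simp add: e_def mult.commute mult.left_commute)
  also have "\<dots> = 1" by (rule exp_integer_2pi) simp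
  finally show ?thesis .
qed

lemma e_half: "e (1/2) = -1"
proof -
  have "e (1/2) = exp (complex_of_real ((2 * 0 + 1) * pi) * \<i>)"
    by (simp add: e_def mult.commute mult.left_commute)
  also have "\<dots> = -1" by (rule exp_integer_2pi_plus1) simp
  finally show ?thesis .
qed

lemma cnj_e: "cnj (e a) = e (- a)"
  by (simp add: e_def exp_cnj)

lemma er_add: "er (a + b) = er a * er b"
  by (simp add: er_def of_rat_add e_add)

lemma er_Ints: "q \<in> \<int> \<Longrightarrow> er q = 1"
  by (auto simp: er_def elim!: Ints_cases simp: e_int)

lemma er_cong: "a - b \<in> \<int> \<Longrightarrow> er a = er b"
proof -
  assume "a - b \<in> \<int>"
  then have "er a = er (a - b) * er b" by (metis diff_add_cancel er_add)
  then show ?thesis using er_Ints[OF \<open>a - b \<in> \<int>\<close>] by simp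
qed

lemma cnj_er: "cnj (er a) = er (- a)"
  by (simp add: er_def cnj_e of_rat_minus)

lemma er_half_odd: "odd k \<Longrightarrow> er (of_int k / 2) = -1"
proof -
  assume "odd k"
  then obtain t where t: "k = 2 * t + 1" by (auto elim!: oddE)
  have "er (of_int k / 2) = er (1/2)"
    by (rule er_cong) (auto simp: t field_simps)
  also have "\<dots> = -1" by (simp add: er_def e_half of_rat_divide)
  finally show ?thesis .
qed

lemma half_not_Int: "(1/2 :: rat) \<notin> \<int>"
proof
  assume "(1/2 :: rat) \<in> \<int>"
  then obtain k where "(1/2::rat) = of_int k" by (auto elim!: Ints_cases)
  then have "(1::rat) = of_int (2 * k)" by (simp add: field_simps)
  then have "(1::int) = 2 * k" by (metis of_int_1 of_int_eq_iff)
  then show False by presburger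
qed

lemma frac_cong: "a - b \<in> \<int> \<Longrightarrow> frac a = frac (b::rat)"
proof -
  assume "a - b \<in> \<int>"
  then obtain k where "a - b = of_int k" by (auto elim!: Ints_cases)
  then have "a = b + of_int k" by (simp add: algebra_simps)
  then show ?thesis by (simp add: frac_def)
qed

lemma frac_eq_D: "frac a = frac (b::rat) \<Longrightarrow> a - b \<in> \<int>"
  by (auto elim!: frac_eqE)

lemma frac_self_Int: "a - frac (a::rat) \<in> \<int>"
  by (simp add: frac_def)

lemma dy_mono: "r * 2 ^ m \<in> \<int> \<Longrightarrow> m \<le> m' \<Longrightarrow> (r::rat) * 2 ^ m' \<in> \<int>"
proof -
  assume "r * 2 ^ m \<in> \<int>" "m \<le> m'"
  then have "r * 2 ^ m * 2 ^ (m' - m) \<in> \<int>" by (simp add: Ints_mult)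
  also have "r * 2 ^ m * 2 ^ (m' - m) = r * 2 ^ m'"
    using \<open>m \<le> m'\<close> by (simp add: mult.assoc power_add[symmetric])
  finally show ?thesis .
qed

lemma dyad_level: "r * 2 ^ m \<in> \<int> \<Longrightarrow> dyad_level r \<le> m \<and> (r::rat) * 2 ^ dyad_level r \<in> \<int>"
  unfolding dyad_level_def
  by (metis (mono_tags, lifting) LeastI Least_le)

lemma int_mult_dy: "r * 2 ^ m \<in> \<int> \<Longrightarrow> of_int (2 ^ m * t) * (r::rat) \<in> \<int>"
  by (metis (no_types, lifting) Ints_mult Ints_of_int mult.commute mult.left_commute of_int_mult of_int_numeral of_int_power)

lemma mod_mult_r_Int:
  assumes "r * 2 ^ m \<in> \<int>" "n mod 2 ^ m = n' mod 2 ^ m"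
  shows "of_int n * (r::rat) - of_int n' * r \<in> \<int>"
proof -
  have "(2::int) ^ m dvd n - n'" using assms(2) by (simp add: mod_eq_dvd_iff)
  then obtain t where "n - n' = 2 ^ m * t" by (auto elim!: dvdE)
  then have "of_int n * r - of_int n' * r = of_int (2 ^ m * t) * r"
    by (metis left_diff_distrib of_int_diff)
  then show ?thesis using int_mult_dy[OF assms(1)] by simp
qed

lemma Pmap_eq:
  assumes x: "x \<in> Z2" and r: "r * 2 ^ m \<in> \<int>" and y: "x m mod 2 ^ m = y mod 2 ^ m"
  shows "Pmap x r = frac (of_int y * r)"
proof -
  let ?l = "dyad_level r"
  have l: "?l \<le> m" "r * 2 ^ ?l \<in> \<int>" using dyad_level[OF r] by auto
  have "x m mod 2 ^ ?l = x ?l" using Z2_le[OF x l(1)] .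
  moreover have "y mod 2 ^ ?l = x m mod 2 ^ ?l"
    using y l(1) by (metis le_imp_power_dvd mod_mod_cancel)
  ultimately have "x ?l mod 2 ^ ?l = y mod 2 ^ ?l" using Z2_mod[OF x] by simp
  then have "of_int (x ?l) * r - of_int y * r \<in> \<int>" by (rule mod_mult_r_Int[OF l(2)])
  then show ?thesis unfolding Pmap_def by (rule frac_cong)
qed

lemma chi_eq:
  assumes x: "x \<in> Z2" and r: "r * 2 ^ m \<in> \<int>" and y: "x m mod 2 ^ m = y mod 2 ^ m"
  shows "chi r x = er (of_int y * r)"
proof -
  have "chi r x = er (frac (of_int y * r))" unfolding chi_def er_def[symmetric] Pmap_eq[OF assms] ..
  also have "\<dots> = er (of_int y * r)"
    by (rule er_cong) (metis frac_self_Int minus_diff_eq Ints_minus)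
  finally show ?thesis .
qed

lemma er_mod:
  assumes "r * 2 ^ m \<in> \<int>" "n mod 2 ^ m = n' mod 2 ^ m"
  shows "er (of_int n * r) = er (of_int n' * r)"
  by (rule er_cong) (rule mod_mult_r_Int[OF assms])

lemma Xhat_D: "r \<in> Xhat \<Longrightarrow> \<exists>m. r * 2 ^ m \<in> \<int>" by (auto simp: Xhat_def)
lemma Xhat_D2: "r \<in> Xhat \<Longrightarrow> 0 \<le> r \<and> r < 1" by (auto simp: Xhat_def)

lemma two_dy: "r \<in> Xhat \<Longrightarrow> s \<in> Xhat \<Longrightarrow> \<exists>m. m \<ge> k \<and> r * 2 ^ m \<in> \<int> \<and> s * 2 ^ m \<in> \<int>"
proof -
  assume "r \<in> Xhat" "s \<in> Xhat"
  then obtain m1 m2 where "r * 2 ^ m1 \<in> \<int>" "s * 2 ^ m2 \<in> \<int>" using Xhat_D by blast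
  then show ?thesis
    by (intro exI[of _ "m1 + m2 + k"]) (auto intro: dy_mono)
qed



abbreviation P where "P \<equiv> Pmap z2_2q"
definition Tm :: "z2 \<Rightarrow> z2 \<Rightarrow> z2" where "Tm a x = z2_sub (z2_mul z2_2q x) a"

lemma P2q: "r * 2 ^ m \<in> \<int> \<Longrightarrow> P r = frac (2 * of_int (z2_q m) * r)"
  using Pmap_eq[OF q2_Z2, of r m "2 * z2_q m"] q2_val[of m] by simp

lemma frac_Xhat: "(z::rat) * 2 ^ m \<in> \<int> \<Longrightarrow> frac z \<in> Xhat"
proof -
  assume z: "z * 2 ^ m \<in> \<int>"
  have "frac z * 2 ^ m = z * 2 ^ m - of_int (\<lfloor>z\<rfloor> * 2 ^ m)" by (simp add: frac_def algebra_simps)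
  also have "\<dots> \<in> \<int>" using z by (intro Ints_diff) auto
  finally show ?thesis unfolding Xhat_def by (auto simp: frac_lt_1)
qed

lemma P_Xhat: "r \<in> Xhat \<Longrightarrow> Pmap x r \<in> Xhat"
proof -
  assume "r \<in> Xhat"
  then obtain m where m: "r * 2 ^ m \<in> \<int>" using Xhat_D by blast
  have l: "r * 2 ^ dyad_level r \<in> \<int>" using dyad_level[OF m] by simp
  have "of_int (x (dyad_level r)) * r * 2 ^ dyad_level r \<in> \<int>"
    using l by (metis Ints_mult Ints_of_int mult.assoc)
  then show ?thesis unfolding Pmap_def by (rule frac_Xhat)
qed

lemma frac_id: "s \<in> Xhat \<Longrightarrow> frac s = s"
  using Xhat_D2 frac_eq by blast

lemma q3_rat: "\<exists>t. 3 * (of_int (z2_q m) :: rat) = 1 + 2 ^ m * of_int t"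
proof -
  obtain t where "3 * z2_q m = 1 + 2 ^ m * t" using q3_ex by blast
  then have "(of_int (3 * z2_q m) :: rat) = of_int (1 + 2 ^ m * t)" by simp
  then show ?thesis by (intro exI[of _ t]) simp
qed

lemma P_rel: "r * 2 ^ m \<in> \<int> \<Longrightarrow> s \<in> Xhat \<Longrightarrow> P r = s \<Longrightarrow> 2 * of_int (z2_q m) * r - s \<in> \<int>"
proof -
  assume r: "r * 2 ^ m \<in> \<int>" and s: "s \<in> Xhat" and Pr: "P r = s"
  have "frac (2 * of_int (z2_q m) * r) = frac s" using P2q[OF r] Pr frac_id[OF s] by simp
  then show ?thesis by (rule frac_eq_D)
qed

lemma preimage_sub:
  assumes r: "r \<in> Xhat" and s: "s \<in> Xhat" and Pr: "P r = s"
  shows "r = frac (3 * s / 2) \<or> r = frac (3 * s / 2 + 1 / 2)"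
proof -
  obtain m where m: "r * 2 ^ m \<in> \<int>" "s * 2 ^ m \<in> \<int>" using two_dy[OF r s] by blast
  define Q where "Q = (of_int (z2_q m) :: rat)"
  obtain t where t: "3 * Q = 1 + 2 ^ m * of_int t" using q3_rat Q_def by blast
  have a: "2 * Q * r - s \<in> \<int>" using P_rel[OF m(1) s Pr] Q_def by simp
  have "3 * (2 * Q * r - s) - 2 * of_int t * (r * 2 ^ m) = 2 * r * (3 * Q) - 3 * s - 2 * of_int t * (r * 2 ^ m)"
    by (simp add: algebra_simps)
  also have "\<dots> = 2 * r * (1 + 2 ^ m * of_int t) - 3 * s - 2 * of_int t * (r * 2 ^ m)"
    by (simp only: t)
  also have "\<dots> = 2 * r - 3 * s" by (simp add: algebra_simps)
  finally have "2 * r - 3 * s = 3 * (2 * Q * r - s) - 2 * of_int t * (r * 2 ^ m)" by simp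
  also have "\<dots> \<in> \<int>" using a m(1) by (rule_tac Ints_diff; rule_tac Ints_mult) auto
  finally obtain k where k: "2 * r - 3 * s = of_int k" by (auto elim!: Ints_cases)
  have rr: "frac r = r" using frac_id[OF r] .
  show ?thesis
  proof (cases "even k")
    case True
    then obtain j where "k = 2 * j" by auto
    then have "r - 3 * s / 2 = of_int j" using k by (simp add: field_simps)
    then have "frac r = frac (3 * s / 2)" by (intro frac_cong) simp
    then show ?thesis using rr by simp
  next
    case False
    then obtain j where "k = 2 * j + 1" by (auto elim!: oddE)
    then have "r - (3 * s / 2 + 1 / 2) = of_int j" using k by (simp add: field_simps)
    then have "frac r = frac (3 * s / 2 + 1 / 2)" by (intro frac_cong) simp
    then show ?thesis using rr by simp
  qed
qed

lemma preimage_sup: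
  assumes s: "s \<in> Xhat" and h: "2 * h \<in> \<int>"
  shows "frac (3 * s / 2 + h) \<in> Xhat \<and> P (frac (3 * s / 2 + h)) = s"
proof -
  obtain m where m: "s * 2 ^ m \<in> \<int>" using Xhat_D[OF s] by blast
  define u where "u = 3 * s / 2 + h"
  have "u * 2 ^ Suc m = 3 * (s * 2 ^ m) + (2 * h) * 2 ^ m" by (simp add: u_def field_simps)
  also have "\<dots> \<in> \<int>" using m h by (rule_tac Ints_add; rule_tac Ints_mult) auto
  finally have uM: "u * 2 ^ Suc m \<in> \<int>" .
  have X: "frac u \<in> Xhat" using frac_Xhat[OF uM] .
  have rM: "frac u * 2 ^ Suc m \<in> \<int>"
  proof -
    have "frac u * 2 ^ Suc m = u * 2 ^ Suc m - of_int (\<lfloor>u\<rfloor> * 2 ^ Suc m)"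
      by (simp add: frac_def algebra_simps)
    also have "\<dots> \<in> \<int>" using uM by (intro Ints_diff) auto
    finally show ?thesis .
  qed
  define Q where "Q = (of_int (z2_q (Suc m)) :: rat)"
  obtain t where t: "3 * Q = 1 + 2 ^ Suc m * of_int t" using q3_rat Q_def by blast
  have "2 * Q * frac u - s = 2 * of_int t * (s * 2 ^ m) + Q * (2 * h) - of_int (2 * \<lfloor>u\<rfloor>) * Q"
  proof -
    have "2 * Q * frac u - s = 2 * Q * (3 * s / 2 + h - of_int \<lfloor>u\<rfloor>) - s"
      by (simp add: frac_def u_def)
    also have "\<dots> = (3 * Q) * s - s + Q * (2 * h) - of_int (2 * \<lfloor>u\<rfloor>) * Q"
      by (simp add: algebra_simps)
    also have "\<dots> = (1 + 2 ^ Suc m * of_int t) * s - s + Q * (2 * h) - of_int (2 * \<lfloor>u\<rfloor>) * Q"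
      by (simp only: t)
    also have "\<dots> = 2 * of_int t * (s * 2 ^ m) + Q * (2 * h) - of_int (2 * \<lfloor>u\<rfloor>) * Q"
      by (simp add: algebra_simps)
    finally show ?thesis .
  qed
  also have "\<dots> \<in> \<int>"
  proof -
    have i1: "2 * of_int t * (s * 2 ^ m) \<in> \<int>" using m by (rule_tac Ints_mult) auto
    have i2: "Q * (2 * h) \<in> \<int>" using h unfolding Q_def by (rule_tac Ints_mult) auto
    have i3: "of_int (2 * \<lfloor>u\<rfloor>) * Q \<in> \<int>" unfolding Q_def by simp
    show ?thesis by (rule Ints_diff[OF Ints_add[OF i1 i2] i3])
  qed
  finally have "2 * Q * frac u - s \<in> \<int>" .
  then have "P (frac u) = frac s" using P2q[OF rM] Q_def frac_cong by simp
  then show ?thesis using X frac_id[OF s] u_def by simp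
qed

definition r0 :: "rat \<Rightarrow> rat" where "r0 s = frac (3 * s / 2)"
definition r1 :: "rat \<Rightarrow> rat" where "r1 s = frac (3 * s / 2 + 1 / 2)"

lemma preimage: "s \<in> Xhat \<Longrightarrow> {r \<in> Xhat. P r = s} = {r0 s, r1 s}"
  using preimage_sub preimage_sup[of s 0] preimage_sup[of s "1/2"] unfolding r0_def r1_def
  by auto

lemma r01_Xhat: "s \<in> Xhat \<Longrightarrow> r0 s \<in> Xhat" "s \<in> Xhat \<Longrightarrow> r1 s \<in> Xhat"
  using preimage by blast+

lemma r01_diff: "r1 s - r0 s - 1/2 \<in> \<int>"
proof -
  have "r1 s - r0 s - 1/2 = (r1 s - (3 * s / 2 + 1 / 2)) - (r0 s - 3 * s / 2)" by simp
  also have "\<dots> \<in> \<int>"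
  proof (rule Ints_diff)
    show "r1 s - (3 * s / 2 + 1 / 2) \<in> \<int>" unfolding r1_def
      using Ints_minus[OF frac_self_Int[of "3 * s / 2 + 1 / 2"]] by simp
    show "r0 s - 3 * s / 2 \<in> \<int>" unfolding r0_def
      using Ints_minus[OF frac_self_Int[of "3 * s / 2"]] by simp
  qed
  finally show ?thesis .
qed

lemma r01_neq: "r0 s \<noteq> r1 s"
proof
  assume "r0 s = r1 s"
  then have "- (1/2::rat) \<in> \<int>" using r01_diff[of s] by simp
  then show False using half_not_Int by (metis Ints_minus minus_minus)
qed

lemma T_Z2[simp]: "x \<in> Z2 \<Longrightarrow> a \<in> Z2 \<Longrightarrow> Tm a x \<in> Z2"
  by (simp add: Tm_def)

lemma T_val: "Tm a x m mod 2 ^ m = (2 * z2_q m * x m - a m) mod 2 ^ m"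
proof -
  have "Tm a x m = ((z2_2q m * x m) mod 2 ^ m - a m) mod 2 ^ m"
    by (simp add: Tm_def z2_sub_def z2_mul_def)
  also have "\<dots> = (z2_2q m * x m - a m) mod 2 ^ m" by (simp add: mod_diff_left_eq)
  also have "\<dots> = (2 * z2_q m * x m - a m) mod 2 ^ m"
    by (intro mod_diff_cong mod_mult_cong q2_val refl)
  finally show ?thesis by simp
qed

lemma chi_prod:
  assumes a: "a \<in> Z2" and y: "y \<in> Z2" and r: "r * 2 ^ m \<in> \<int>"
  shows "chi r (z2_neg a) * cnj (chi r y) = er (of_int (- (a m + y m)) * r)"
proof -
  have 1: "chi r (z2_neg a) = er (of_int (- a m) * r)"
    by (rule chi_eq[OF z2_neg_Z2[OF a] r]) (simp add: z2_neg_def)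
  have 2: "chi r y = er (of_int (y m) * r)" by (rule chi_eq[OF y r]) simp
  show ?thesis unfolding 1 2 cnj_er er_add[symmetric] by (simp add: algebra_simps)
qed

lemma chi_T:
  assumes x: "x \<in> Z2" and a: "a \<in> Z2" and r: "r \<in> Xhat" and s: "s \<in> Xhat" and Pr: "P r = s"
  shows "chi r (z2_neg a) * cnj (chi r (Tm a x)) = cnj (chi s x)"
proof -
  obtain m where m: "r * 2 ^ m \<in> \<int>" "s * 2 ^ m \<in> \<int>" using two_dy[OF r s] by blast
  have "chi r (z2_neg a) * cnj (chi r (Tm a x)) = er (of_int (- (a m + Tm a x m)) * r)"
    using chi_prod[OF a T_Z2[OF x a] m(1)] .
  also have "\<dots> = er (of_int (- (2 * z2_q m * x m)) * r)"
  proof (rule er_mod[OF m(1)])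
    have "(a m + Tm a x m) mod 2 ^ m = (a m + (2 * z2_q m * x m - a m)) mod 2 ^ m"
      using T_val[of a x m] by (metis mod_add_cong)
    then have "(a m + Tm a x m) mod 2 ^ m = (2 * z2_q m * x m) mod 2 ^ m" by simp
    then show "- (a m + Tm a x m) mod 2 ^ m = - (2 * z2_q m * x m) mod 2 ^ m"
      by (metis mod_minus_cong)
  qed
  also have "\<dots> = er (of_int (- x m) * s)"
  proof (rule er_cong)
    have "of_int (- (2 * z2_q m * x m)) * r - of_int (- x m) * s
          = - of_int (x m) * (2 * of_int (z2_q m) * r - s)" by (simp add: algebra_simps)
    also have "\<dots> \<in> \<int>" using P_rel[OF m(1) s Pr] by (intro Ints_mult) auto
    finally show "of_int (- (2 * z2_q m * x m)) * r - of_int (- x m) * s \<in> \<int>" .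
  qed
  also have "\<dots> = cnj (chi s x)"
    using chi_eq[OF x m(2), of "x m"] by (simp add: cnj_er)
  finally show ?thesis .
qed

lemma chi_vanish:
  assumes y: "y \<in> Z2" and a: "a \<in> Z2" and s: "s \<in> Xhat" and odd: "odd (y 1 + a 1)"
  shows "chi (r0 s) (z2_neg a) * cnj (chi (r0 s) y) + chi (r1 s) (z2_neg a) * cnj (chi (r1 s) y) = 0"
proof -
  obtain m where m: "m \<ge> 1" "r0 s * 2 ^ m \<in> \<int>" "r1 s * 2 ^ m \<in> \<int>"
    using two_dy[OF r01_Xhat(1)[OF s] r01_Xhat(2)[OF s], of 1] by blast
  define n where "n = a m + y m"
  have "a m mod 2 = a 1" "y m mod 2 = y 1" using Z2_le[OF a m(1)] Z2_le[OF y m(1)] by simp_all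
  then have "odd n" using odd unfolding n_def by presburger
  have "chi (r1 s) (z2_neg a) * cnj (chi (r1 s) y) = er (of_int (- n) * r1 s)"
    using chi_prod[OF a y m(3)] n_def by simp
  also have "\<dots> = er (of_int (- n) * r0 s + of_int (- n) / 2)"
  proof (rule er_cong)
    have "of_int (- n) * r1 s - (of_int (- n) * r0 s + of_int (- n) / 2) = of_int (- n) * (r1 s - r0 s - 1/2)"
      by (simp add: algebra_simps)
    also have "\<dots> \<in> \<int>" using r01_diff by (intro Ints_mult) auto
    finally show "of_int (- n) * r1 s - (of_int (- n) * r0 s + of_int (- n) / 2) \<in> \<int>" .
  qed
  also have "\<dots> = - er (of_int (- n) * r0 s)"
    using er_half_odd[of "- n"] \<open>odd n\<close> er_add[of "of_int (- n) * r0 s" "of_int (- n) / 2"] by simp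
  also have "er (of_int (- n) * r0 s) = chi (r0 s) (z2_neg a) * cnj (chi (r0 s) y)"
    using chi_prod[OF a y m(2)] n_def by simp
  finally show ?thesis by simp
qed



lemma Z2_sets: "Z2 \<in> sets MZ"
proof -
  have "Z2 = {x \<in> space MZ. (\<forall>n. 0 \<le> x n \<and> x n < 2 ^ n) \<and> (\<forall>n. x (Suc n) mod 2 ^ n = x n)}"
    by (simp add: Z2_def)
  also have "\<dots> \<in> sets MZ" by measurable
  finally show ?thesis .
qed

lemma coin_set_meas: "{b. \<forall>i<N. b i = c i} \<in> sets coin_flips"
proof -
  have "{b. \<forall>i<N. b i = c i} = {b \<in> space coin_flips. \<forall>i<N. b i = c i}"
    by (simp add: coin_flips_def space_PiM)
  also have "\<dots> \<in> sets coin_flips" unfolding coin_flips_def by measurable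
  finally show ?thesis .
qed

lemma bits_char:
  "(\<Sum>i<N. if b i then 2 ^ i else 0) = (u::int) \<longleftrightarrow>
     0 \<le> u \<and> u < 2 ^ N \<and> (\<forall>i<N. b i = odd (u div 2 ^ i))"
proof (induction N arbitrary: b u)
  case 0 then show ?case by auto
next
  case (Suc N)
  define x where "x = (if b 0 then 1 else 0 :: int)"
  define y where "y = (\<Sum>i<N. if b (Suc i) then 2 ^ i else 0 :: int)"
  have S: "(\<Sum>i<Suc N. if b i then 2 ^ i else 0 :: int) = x + 2 * y"
    unfolding x_def y_def sum.lessThan_Suc_shift
    by (simp add: sum_distrib_left if_distrib cong: if_cong)
  have x01: "x = 0 \<or> x = 1" by (simp add: x_def)
  have "(x + 2 * y = u) \<longleftrightarrow> (x = u mod 2 \<and> y = u div 2)" using x01 by presburger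
  also have "x = u mod 2 \<longleftrightarrow> b 0 = odd u" by (auto simp: x_def odd_iff_mod_2_eq_one)
  also have "y = u div 2 \<longleftrightarrow> 0 \<le> u div 2 \<and> u div 2 < 2 ^ N \<and> (\<forall>i<N. b (Suc i) = odd (u div 2 div 2 ^ i))"
    unfolding y_def by (rule Suc.IH)
  also have "(\<forall>i<N. b (Suc i) = odd (u div 2 div 2 ^ i)) \<longleftrightarrow> (\<forall>i<N. b (Suc i) = odd (u div 2 ^ Suc i))"
    by (simp add: zdiv_zmult2_eq)
  finally have X: "(x + 2 * y = u) \<longleftrightarrow> (b 0 = odd u \<and> 0 \<le> u div 2 \<and> u div 2 < 2 ^ N \<and> (\<forall>i<N. b (Suc i) = odd (u div 2 ^ Suc i)))" .
  moreover have "0 \<le> u div 2 \<and> u div 2 < 2 ^ N \<longleftrightarrow> 0 \<le> u \<and> u < 2 ^ Suc N" by auto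
  ultimately show ?case unfolding S by (auto simp: less_Suc_eq_0_disj)
qed

lemma bits_to_z2_Z2: "bits_to_z2 b \<in> Z2"
proof -
  have R: "0 \<le> bits_to_z2 b n \<and> bits_to_z2 b n < 2 ^ n" for n
  proof -
    have "(\<Sum>i<n. if b i then 2 ^ i else 0) = bits_to_z2 b n" by (simp add: bits_to_z2_def)
    from iffD1[OF bits_char this] show ?thesis by blast
  qed
  have "bits_to_z2 b (Suc n) mod 2 ^ n = bits_to_z2 b n" for n
  proof -
    have "bits_to_z2 b (Suc n) = bits_to_z2 b n + (if b n then 2 ^ n else 0)"
      by (simp add: bits_to_z2_def)
    then have "bits_to_z2 b (Suc n) mod 2 ^ n = bits_to_z2 b n mod 2 ^ n" by auto
    then show ?thesis using R[of n] by simp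
  qed
  then show ?thesis unfolding Z2_def using R by auto
qed

lemma space_coin[simp]: "space coin_flips = UNIV" by (simp add: coin_flips_def space_PiM)

lemma bits_eq_iff: "0 \<le> u \<and> u < 2 ^ n \<Longrightarrow> bits_to_z2 b n = u \<longleftrightarrow> (\<forall>i<n. b i = odd (u div 2 ^ i))"
  unfolding bits_to_z2_def using bits_char[where b=b and N=n and u=u] by simp

lemma bits_ne: "\<not> (0 \<le> u \<and> u < 2 ^ n) \<Longrightarrow> bits_to_z2 b n \<noteq> u"
  unfolding bits_to_z2_def using bits_char[where b=b and N=n and u=u] by blast

lemma bits_meas: "bits_to_z2 \<in> measurable coin_flips MZ"
proof -
  have "(\<lambda>b. bits_to_z2 b n) \<in> measurable coin_flips (count_space UNIV)" for n
  proof (subst measurable_count_space_eq2_countable, intro conjI ballI)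
    fix u :: int
    show "(\<lambda>b. bits_to_z2 b n) -` {u} \<inter> space coin_flips \<in> sets coin_flips"
    proof (cases "0 \<le> u \<and> u < 2 ^ n")
      case True
      then have "(\<lambda>b. bits_to_z2 b n) -` {u} \<inter> space coin_flips = {b. \<forall>i<n. b i = odd (u div 2 ^ i)}"
        by (intro set_eqI) (simp add: bits_eq_iff[OF True])
      then show ?thesis using coin_set_meas by simp
    next
      case False
      then have "(\<lambda>b. bits_to_z2 b n) -` {u} \<inter> space coin_flips = {}"
        by (intro set_eqI) (simp add: bits_ne[OF False])
      then show ?thesis by simp
    qed
  qed auto
  then show ?thesis
    by (intro measurable_PiM_single'[where f="\<lambda>n b. bits_to_z2 b n", simplified]) auto
qed

lemma prob_coin: "prob_space coin_flips"
  unfolding coin_flips_def by (intro prob_space_PiM prob_space_measure_pmf)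

lemma prob_haar: "prob_space haar"
  unfolding haar_def by (intro prob_space.prob_space_distr[OF prob_coin] bits_meas)

lemma AE_Z2: "AE x in haar. x \<in> Z2"
  unfolding haar_def
  by (subst AE_distr_iff[OF bits_meas]) (auto simp: bits_to_z2_Z2 Z2_sets)

lemma haar_single: "emeasure haar {x. x N = u} = (if 0 \<le> u \<and> u < 2 ^ N then ennreal ((1/2) ^ N) else 0)"
proof -
  have meas: "{x. x N = u} \<in> sets MZ"
  proof -
    have "{x. x N = u} = {x \<in> space MZ. x N = u}" by simp
    also have "\<dots> \<in> sets MZ" by measurable
    finally show ?thesis .
  qed
  have "emeasure haar {x. x N = u} = emeasure coin_flips (bits_to_z2 -` {x. x N = u} \<inter> space coin_flips)"
    unfolding haar_def by (rule emeasure_distr[OF bits_meas meas])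
  also have "\<dots> = (if 0 \<le> u \<and> u < 2 ^ N then ennreal ((1/2) ^ N) else 0)"
  proof (cases "0 \<le> u \<and> u < 2 ^ N")
    case True
    define c where "c i = odd (u div 2 ^ i)" for i
    have "bits_to_z2 -` {x. x N = u} \<inter> space coin_flips =
          prod_emb UNIV (\<lambda>_. measure_pmf (pmf_of_set {False, True})) {..<N} (Pi\<^sub>E {..<N} (\<lambda>i. {c i}))"
      by (intro set_eqI) (simp add: bits_eq_iff[OF True] coin_flips_def space_PiM prod_emb_def PiE_iff c_def lessThan_iff Ball_def)
    then have "emeasure coin_flips (bits_to_z2 -` {x. x N = u} \<inter> space coin_flips) =
               (\<Prod>i<N. emeasure (measure_pmf (pmf_of_set {False, True})) {c i})"
      unfolding coin_flips_def
      by (simp add: emeasure_PiM_emb prob_space_measure_pmf)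
    also have "\<dots> = (\<Prod>i<N. ennreal (1/2))"
      by (intro prod.cong refl) (simp add: emeasure_pmf_single)
    also have "\<dots> = ennreal (1/2) ^ N" by (subst prod_constant) simp
    also have "\<dots> = ennreal ((1/2) ^ N)" by (rule ennreal_power) simp
    finally show ?thesis using True by simp
  next
    case False
    then have "bits_to_z2 -` {x. x N = u} \<inter> space coin_flips = {}"
      by (intro set_eqI) (simp add: bits_ne[OF False])
    then show ?thesis using False by simp
  qed
  finally show ?thesis .
qed



lemma coord_sets: "{x. pp (x N)} \<in> sets MZ"
proof -
  have "{x. pp (x N)} = (\<lambda>x. x N) -` {v. pp v} \<inter> space MZ" by auto
  also have "\<dots> \<in> sets MZ"
    by (rule measurable_sets[OF measurable_component_singleton]) auto
  finally show ?thesis .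
qed

lemma coord_meas: "sets R = sets MZ \<Longrightarrow> (\<lambda>x. x N) \<in> measurable R (count_space UNIV)"
  using measurable_component_singleton[of N UNIV "\<lambda>_. count_space (UNIV::int set)"]
  by (simp add: measurable_cong_sets)

lemma measure_eq_Z2:
  assumes sP: "sets MP = sets MZ" and sQ: "sets MQ = sets MZ" and fin: "finite_measure MP"
    and aP: "AE x in MP. x \<in> Z2" and aQ: "AE x in MQ. x \<in> Z2"
    and eq: "\<And>N u. emeasure MP {x. x N = u} = emeasure MQ {x. x N = u}"
  shows "MP = MQ"
proof (rule measure_eqI_PiM_infinite[where I=UNIV and M="\<lambda>_. count_space UNIV"])
  show "sets MP = sets MZ" "sets MQ = sets MZ" by fact+
  show "finite_measure MP" by fact
  fix A J assume J: "finite (J::nat set)" "J \<subseteq> UNIV" and A: "\<And>i. i \<in> J \<Longrightarrow> A i \<in> sets (count_space (UNIV::int set))"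
  define C where "C = prod_emb UNIV (\<lambda>_. count_space (UNIV::int set)) J (Pi\<^sub>E J A)"
  define N where "N = Max (insert 0 J)"
  have iN: "i \<in> J \<Longrightarrow> i \<le> N" for i using J(1) unfolding N_def by simp
  define G where "G = {v. \<forall>i\<in>J. v mod 2 ^ i \<in> A i}"
  have C_iff: "x \<in> C \<longleftrightarrow> x N \<in> G" if "x \<in> Z2" for x
  proof -
    have "x \<in> C \<longleftrightarrow> (\<forall>i\<in>J. x i \<in> A i)"
      by (simp add: C_def prod_emb_def PiE_iff space_PiM)
    also have "\<dots> \<longleftrightarrow> x N \<in> G"
      unfolding G_def using Z2_le[OF that iN] by simp
    finally show ?thesis .
  qed
  have C_sets: "C \<in> sets MZ" unfolding C_def
    by (rule sets_PiM_I) (use J A in auto)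
  have red: "emeasure R C = emeasure (distr R (count_space UNIV) (\<lambda>x. x N)) G"
    if sR: "sets R = sets MZ" and aR: "AE x in R. x \<in> Z2" for R
  proof -
    have spR: "space R = UNIV" using sets_eq_imp_space_eq[OF sR] by simp
    have "emeasure (distr R (count_space UNIV) (\<lambda>x. x N)) G = emeasure R ((\<lambda>x. x N) -` G \<inter> space R)"
      by (rule emeasure_distr[OF coord_meas[OF sR]]) simp
    also have "\<dots> = emeasure R C"
    proof (rule emeasure_eq_AE)
      show "AE x in R. (x \<in> (\<lambda>x. x N) -` G \<inter> space R) = (x \<in> C)"
        using aR by eventually_elim (simp add: C_iff spR)
      show "(\<lambda>x. x N) -` G \<inter> space R \<in> sets R" unfolding spR sR
        using coord_sets[of "\<lambda>v. v \<in> G" N] by (simp add: vimage_def)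
      show "C \<in> sets R" using C_sets sR by simp
    qed
    finally show ?thesis by simp
  qed
  have "distr MP (count_space UNIV) (\<lambda>x. x N) = distr MQ (count_space UNIV) (\<lambda>x. x N)"
  proof (rule measure_eqI_countable[where A=UNIV])
    fix u :: int
    have spP: "space MP = UNIV" using sets_eq_imp_space_eq[OF sP] by simp
    have spQ: "space MQ = UNIV" using sets_eq_imp_space_eq[OF sQ] by simp
    have "emeasure (distr MP (count_space UNIV) (\<lambda>x. x N)) {u} = emeasure MP {x. x N = u}"
      by (subst emeasure_distr[OF coord_meas[OF sP]]) (auto simp: spP vimage_def)
    also have "\<dots> = emeasure MQ {x. x N = u}" by (rule eq)
    also have "\<dots> = emeasure (distr MQ (count_space UNIV) (\<lambda>x. x N)) {u}"
      by (subst emeasure_distr[OF coord_meas[OF sQ]]) (auto simp: spQ vimage_def)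
    finally show "emeasure (distr MP (count_space UNIV) (\<lambda>x. x N)) {u} = emeasure (distr MQ (count_space UNIV) (\<lambda>x. x N)) {u}" .
  qed auto
  then show "emeasure MP (prod_emb UNIV (\<lambda>_. count_space UNIV) J (Pi\<^sub>E J A)) =
             emeasure MQ (prod_emb UNIV (\<lambda>_. count_space UNIV) J (Pi\<^sub>E J A))"
    using red[OF sP aP] red[OF sQ aQ] unfolding C_def by simp
qed



lemma arith_key:
  fixes q X A v M t :: int
  assumes q: "3 * q = 1 + 2 * M * t"
  shows "(2 * M) dvd (2 * q * X - A - v) \<longleftrightarrow> even (v + A) \<and> M dvd (X - 3 * ((v + A) div 2))"
proof
  assume d: "(2 * M) dvd (2 * q * X - A - v)"
  then have "2 dvd (2 * q * X - A - v)" using dvd_mult_left by blast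
  moreover have "v + A = 2 * (q * X) - (2 * q * X - A - v)" by simp
  ultimately have ev: "even (v + A)" by (metis dvd_diff dvd_triv_left)
  then obtain w where w: "v + A = 2 * w" by blast
  have eq: "2 * q * X - A - v = 2 * (q * X - w)" using w by simp
  from d have "2 * M dvd 2 * (q * X - w)" unfolding eq .
  then have "M dvd (q * X - w)" by (metis dvd_times_left_cancel_iff zero_neq_numeral)
  moreover have "X - 3 * w = 3 * (q * X - w) - (3 * q - 1) * X" by (simp add: algebra_simps)
  moreover have "M dvd (3 * q - 1) * X" using q by simp
  ultimately have "M dvd X - 3 * w" by (metis dvd_diff dvd_mult)
  then show "even (v + A) \<and> M dvd (X - 3 * ((v + A) div 2))" using ev w by simp
next
  assume "even (v + A) \<and> M dvd (X - 3 * ((v + A) div 2))"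
  then have ev: "even (v + A)" and d: "M dvd X - 3 * ((v + A) div 2)" by auto
  define w where "w = (v + A) div 2"
  have w: "v + A = 2 * w" using ev unfolding w_def by simp
  have d: "M dvd X - 3 * w" using d unfolding w_def .
  have "q * X - w = q * (X - 3 * w) + (3 * q - 1) * w" by (simp add: algebra_simps)
  moreover have "M dvd (3 * q - 1) * w" using q by simp
  ultimately have "M dvd q * X - w" using d by (metis dvd_add dvd_mult)
  moreover have "2 * q * X - A - v = 2 * (q * X - w)" using w by simp
  ultimately show "(2 * M) dvd (2 * q * X - A - v)" by (metis mult_dvd_mono dvd_refl)
qed

lemma T_pre:
  assumes x: "x \<in> Z2" and a: "a \<in> Z2"
  shows "Tm a x (Suc n) = v \<longleftrightarrow>
    (0 \<le> v \<and> v < 2 ^ Suc n \<and> even (v + a (Suc n)) \<and> x n = (3 * ((v + a (Suc n)) div 2)) mod 2 ^ n)"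
proof -
  let ?N = "Suc n"
  obtain t where t: "3 * z2_q ?N = 1 + 2 ^ ?N * t" using q3_ex by blast
  have t': "3 * z2_q ?N = 1 + 2 * 2 ^ n * t" using t by simp
  have TN: "Tm a x ?N = (2 * z2_q ?N * x ?N - a ?N) mod 2 ^ ?N"
    using T_val[of a x ?N] Z2_mod[OF T_Z2[OF x a], of ?N] by simp
  have xn: "x n = x ?N mod 2 ^ n" using Z2_suc[OF x] by simp
  show ?thesis
  proof (cases "0 \<le> v \<and> v < 2 ^ ?N")
    case False
    then have "Tm a x ?N \<noteq> v" using Z2_D[OF T_Z2[OF x a], of ?N] by auto
    then show ?thesis using False by blast
  next
    case True
    then have "Tm a x ?N = v \<longleftrightarrow> (2 * z2_q ?N * x ?N - a ?N) mod 2 ^ ?N = v mod 2 ^ ?N"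
      using TN by simp
    also have "\<dots> \<longleftrightarrow> (2 * 2 ^ n) dvd (2 * z2_q ?N * x ?N - a ?N - v)"
      by (simp add: mod_eq_dvd_iff)
    also have "\<dots> \<longleftrightarrow> even (v + a ?N) \<and> 2 ^ n dvd (x ?N - 3 * ((v + a ?N) div 2))"
      by (rule arith_key[OF t'])
    also have "2 ^ n dvd (x ?N - 3 * ((v + a ?N) div 2)) \<longleftrightarrow> x n = (3 * ((v + a ?N) div 2)) mod 2 ^ n"
      unfolding xn by (simp add: mod_eq_dvd_iff)
    finally show ?thesis using True by simp
  qed
qed

lemma T_meas: "Tm a \<in> measurable MZ MZ"
proof -
  have "(\<lambda>x. Tm a x n) \<in> measurable MZ (count_space UNIV)" for n
  proof -
    have "(\<lambda>x. Tm a x n) = (\<lambda>v. ((z2_2q n * v) mod 2 ^ n - a n) mod 2 ^ n) \<circ> (\<lambda>x. x n)"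
      by (auto simp: Tm_def z2_sub_def z2_mul_def)
    also have "\<dots> \<in> measurable MZ (count_space UNIV)"
      by (rule measurable_comp[OF measurable_component_singleton]) auto
    finally show ?thesis .
  qed
  then show ?thesis
    by (intro measurable_PiM_single'[where f="\<lambda>n x. Tm a x n", simplified]) auto
qed

definition Ea :: "z2 \<Rightarrow> z2 set" where "Ea a = {y. even (y 1 + a 1)}"

lemma Ea_sets: "Ea a \<in> sets MZ"
  unfolding Ea_def by (rule coord_sets)



lemma coord_eq_sets[simp]: "{x. x N = (v::int)} \<in> sets MZ"
  using coord_sets[of "\<lambda>w. w = v" N] by simp

lemma UNIV_sets[simp]: "UNIV \<in> sets MZ"
  using sets.top[of MZ] by simp

lemma haar_AE_eq:
  assumes "\<And>x. x \<in> Z2 \<Longrightarrow> x \<in> A \<longleftrightarrow> x \<in> B" "A \<in> sets MZ" "B \<in> sets MZ"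
  shows "emeasure haar A = emeasure haar B"
  by (rule emeasure_eq_AE) (use AE_Z2 assms in \<open>auto elim!: eventually_mono\<close>)

lemma T_meas_haar: "Tm a \<in> measurable haar MZ"
  using T_meas measurable_cong_sets[OF sets_haar refl, of MZ] by simp

lemma T_coord_sets: "{x. Tm a x N = v} \<in> sets MZ"
proof -
  have "{x. Tm a x N = v} = Tm a -` {y. y N = v} \<inter> space MZ" by auto
  also have "\<dots> \<in> sets MZ" by (rule measurable_sets[OF T_meas coord_eq_sets])
  finally show ?thesis .
qed

lemma haar_UNIV: "emeasure haar UNIV = 1"
  using prob_space.emeasure_space_1[OF prob_haar] by simp

lemma two_half: "2 * ennreal ((1/2) ^ Suc n) = ennreal ((1/2) ^ n)"
proof -
  have "2 * ennreal ((1/2) ^ Suc n) = ennreal 2 * ennreal ((1/2) ^ Suc n)" by simp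
  also have "\<dots> = ennreal (2 * (1/2) ^ Suc n)" by (rule ennreal_mult[symmetric]) auto
  also have "2 * (1/2::real) ^ Suc n = (1/2) ^ n" by simp
  finally show ?thesis .
qed

lemma dens_eq:
  assumes a: "a \<in> Z2"
  shows "distr haar MZ (Tm a) = density haar (\<lambda>y. ennreal (2 * indicator (Ea a) y))"
proof (rule measure_eq_Z2)
  have dmeas: "(\<lambda>y. ennreal (2 * indicator (Ea a) y)) \<in> borel_measurable haar"
    using Ea_sets[of a] by (simp add: measurable_cong_sets[OF sets_haar refl])
  show "sets (distr haar MZ (Tm a)) = sets MZ" by simp
  show "sets (density haar (\<lambda>y. ennreal (2 * indicator (Ea a) y))) = sets MZ" by simp
  show "finite_measure (distr haar MZ (Tm a))"
    using prob_space.prob_space_distr[OF prob_haar T_meas_haar]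
    by (simp add: prob_space_def)
  show "AE x in distr haar MZ (Tm a). x \<in> Z2"
    by (subst AE_distr_iff[OF T_meas_haar]) (use AE_Z2 a Z2_sets in \<open>auto elim!: eventually_mono\<close>)
  show "AE x in density haar (\<lambda>y. ennreal (2 * indicator (Ea a) y)). x \<in> Z2"
    by (subst AE_density[OF dmeas]) (use AE_Z2 in \<open>auto elim!: eventually_mono\<close>)
  fix N :: nat and v :: int
  have L: "emeasure (distr haar MZ (Tm a)) {y. y N = v} = emeasure haar {x. Tm a x N = v}"
    by (subst emeasure_distr[OF T_meas_haar coord_eq_sets]) (auto simp: vimage_def)
  have R: "emeasure (density haar (\<lambda>y. ennreal (2 * indicator (Ea a) y))) {y. y N = v}
        = 2 * emeasure haar (Ea a \<inter> {y. y N = v})"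
  proof -
    have "emeasure (density haar (\<lambda>y. ennreal (2 * indicator (Ea a) y))) {y. y N = v}
        = (\<integral>\<^sup>+ y. ennreal (2 * indicator (Ea a) y) * indicator {y. y N = v} y \<partial>haar)"
      by (rule emeasure_density[OF dmeas]) (simp add: coord_sets)
    also have "\<dots> = (\<integral>\<^sup>+ y. 2 * indicator (Ea a \<inter> {y. y N = v}) y \<partial>haar)"
      by (intro nn_integral_cong) (auto split: split_indicator)
    also have "\<dots> = 2 * emeasure haar (Ea a \<inter> {y. y N = v})"
      by (rule nn_integral_cmult_indicator) (simp add: Ea_sets coord_sets sets.Int)
    finally show ?thesis .
  qed
  have EaN: "Ea a \<inter> {y. y N = v} \<in> sets MZ" by (simp add: Ea_sets coord_sets sets.Int)
  show "emeasure (distr haar MZ (Tm a)) {y. y N = v} =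
        emeasure (density haar (\<lambda>y. ennreal (2 * indicator (Ea a) y))) {y. y N = v}"
    unfolding L R
  proof (cases N)
    case 0
    have a1: "0 \<le> a 1 \<and> a 1 < 2" using Z2_D[OF a, of 1] by simp
    have "emeasure haar {x. Tm a x N = v} = emeasure haar (if v = 0 then UNIV else {})"
      by (rule haar_AE_eq) (auto simp: 0 T_coord_sets Tm_def z2_sub_def)
    also have "\<dots> = (if v = 0 then 1 else 0)" by (simp add: haar_UNIV)
    finally have l: "emeasure haar {x. Tm a x N = v} = (if v = 0 then 1 else 0)" .
    have "emeasure haar (Ea a \<inter> {y. y N = v}) = emeasure haar (if v = 0 then {y. y 1 = a 1} else {})"
    proof (rule haar_AE_eq[OF _ EaN])
      fix y assume y: "y \<in> Z2"
      have "0 \<le> y 1 \<and> y 1 < 2" "y 0 = 0" using Z2_D[OF y, of 1] Z2_D[OF y, of 0] by auto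
      then show "y \<in> Ea a \<inter> {y. y N = v} \<longleftrightarrow> y \<in> (if v = 0 then {y. y 1 = a 1} else {})"
        using a1 by (auto simp: Ea_def 0) presburger+
    qed (simp add: coord_sets)
    also have "\<dots> = (if v = 0 then ennreal (1/2) else 0)"
      using haar_single[of 1 "a 1"] a1 by simp
    finally have r: "emeasure haar (Ea a \<inter> {y. y N = v}) = (if v = 0 then ennreal (1/2) else 0)" .
    show "emeasure haar {x. Tm a x N = v} = 2 * emeasure haar (Ea a \<inter> {y. y N = v})"
      unfolding l r using two_half[of 0] by simp
  next
    case (Suc n)
    define w where "w = (3 * ((v + a (Suc n)) div 2)) mod 2 ^ n"
    define c where "c = (0 \<le> v \<and> v < 2 ^ Suc n \<and> even (v + a (Suc n)))"
    have "emeasure haar {x. Tm a x N = v} = emeasure haar (if c then {x. x n = w} else {})"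
      by (rule haar_AE_eq) (auto simp: Suc T_coord_sets coord_sets T_pre[OF _ a] c_def w_def)
    also have "\<dots> = (if c then ennreal ((1/2) ^ n) else 0)"
      using haar_single[of n w] by (simp add: w_def)
    finally have l: "emeasure haar {x. Tm a x N = v} = (if c then ennreal ((1/2) ^ n) else 0)" .
    have "emeasure haar (Ea a \<inter> {y. y N = v}) = emeasure haar (if even (v + a (Suc n)) then {y. y N = v} else {})"
    proof (rule haar_AE_eq[OF _ EaN])
      fix y assume y: "y \<in> Z2"
      have "y N mod 2 = y 1" "a N mod 2 = a 1" using Z2_le[OF y, of 1 N] Z2_le[OF a, of 1 N] Suc by auto
      then show "y \<in> Ea a \<inter> {y. y N = v} \<longleftrightarrow> y \<in> (if even (v + a (Suc n)) then {y. y N = v} else {})"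
        by (auto simp: Ea_def Suc) presburger+
    qed (simp add: coord_sets)
    also have "\<dots> = (if c then ennreal ((1/2) ^ Suc n) else 0)"
      using haar_single[of N v] by (auto simp: c_def Suc)
    finally have r: "emeasure haar (Ea a \<inter> {y. y N = v}) = (if c then ennreal ((1/2) ^ Suc n) else 0)" .
    show "emeasure haar {x. Tm a x N = v} = 2 * emeasure haar (Ea a \<inter> {y. y N = v})"
      unfolding l r using two_half[of n] by simp
  qed
qed



lemma norm_e: "cmod (e t) = 1"
proof -
  have "e t = exp (\<i> * complex_of_real (2 * pi * t))" by (simp add: e_def mult.commute mult.left_commute)
  then show ?thesis using norm_exp_i_times by simp
qed

lemma norm_chi: "cmod (chi r x) = 1" by (simp add: chi_def norm_e)

lemma chi_meas: "chi r \<in> borel_measurable haar"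
proof -
  have "chi r = (\<lambda>v. e (of_rat (frac (of_int v * r)))) \<circ> (\<lambda>x. x (dyad_level r))"
    by (auto simp: chi_def Pmap_def)
  also have "\<dots> \<in> borel_measurable haar"
    by (rule measurable_comp[OF coord_meas[OF sets_haar]]) (simp add: measurable_count_space_eq1)
  finally show ?thesis .
qed

lemma cnj_chi_meas: "(\<lambda>y. cnj (chi r y)) \<in> borel_measurable haar"
proof -
  have "(\<lambda>y. cnj (chi r y)) = (\<lambda>v. cnj (e (of_rat (frac (of_int v * r))))) \<circ> (\<lambda>x. x (dyad_level r))"
    by (auto simp: chi_def Pmap_def)
  also have "\<dots> \<in> borel_measurable haar"
    by (rule measurable_comp[OF coord_meas[OF sets_haar]]) (simp add: measurable_count_space_eq1)
  finally show ?thesis .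
qed

lemma integrable_mult_chi:
  assumes f: "integrable haar f" and g: "g \<in> borel_measurable haar" and n: "\<And>x. cmod (g x) = 1"
  shows "integrable haar (\<lambda>x. f x * g x)"
proof (rule Bochner_Integration.integrable_bound[OF f])
  show "(\<lambda>x. f x * g x) \<in> borel_measurable haar"
    using borel_measurable_integrable[OF f] g by (rule borel_measurable_times)
  show "AE x in haar. norm (f x * g x) \<le> norm (f x)" by (simp add: norm_mult n)
qed

lemma meas_MZ: assumes "f \<in> borel_measurable haar" shows "f \<in> borel_measurable MZ"
  using assms unfolding measurable_cong_sets[OF sets_haar refl, of borel] .

lemma integrable_T:
  assumes a: "a \<in> Z2" and f: "integrable haar (f :: z2 \<Rightarrow> complex)"
  shows "integrable haar (\<lambda>x. f (Tm a x))"
proof -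
  have fm: "f \<in> borel_measurable MZ" using meas_MZ[OF borel_measurable_integrable[OF f]] .
  have gm: "(\<lambda>y. 2 * indicator (Ea a) y :: real) \<in> borel_measurable haar"
    using Ea_sets[of a] by (simp add: measurable_cong_sets[OF sets_haar refl])
  have "integrable haar (\<lambda>y. (2 * indicator (Ea a) y :: real) *\<^sub>R f y)"
  proof -
    have "integrable haar (\<lambda>y. 2 *\<^sub>R (indicator (Ea a) y *\<^sub>R f y))"
      by (intro integrable_scaleR_right integrable_mult_indicator f) (simp add: Ea_sets)
    then show ?thesis by simp
  qed
  then have "integrable (density haar (\<lambda>y. ennreal (2 * indicator (Ea a) y))) f"
    by (subst integrable_density[OF borel_measurable_integrable[OF f] gm]) auto
  then have "integrable (distr haar MZ (Tm a)) f" using dens_eq[OF a] by simp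
  then show ?thesis by (subst (asm) integrable_distr_eq[OF T_meas_haar fm])
qed

definition Gs :: "z2 \<Rightarrow> rat \<Rightarrow> z2 \<Rightarrow> complex" where
  "Gs a s y = (\<Sum>r\<in>{r0 s, r1 s}. chi r (z2_neg a) * cnj (chi r y))"

lemma Gs_T: "x \<in> Z2 \<Longrightarrow> a \<in> Z2 \<Longrightarrow> s \<in> Xhat \<Longrightarrow> Gs a s (Tm a x) = 2 * cnj (chi s x)"
proof -
  assume x: "x \<in> Z2" and a: "a \<in> Z2" and s: "s \<in> Xhat"
  have "r \<in> {r0 s, r1 s} \<Longrightarrow> chi r (z2_neg a) * cnj (chi r (Tm a x)) = cnj (chi s x)" for r
    using chi_T[OF x a _ s] preimage[OF s] by blast
  then have "Gs a s (Tm a x) = (\<Sum>r\<in>{r0 s, r1 s}. cnj (chi s x))" unfolding Gs_def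
    by (intro sum.cong) auto
  also have "\<dots> = 2 * cnj (chi s x)" using r01_neq[of s] by simp
  finally show ?thesis .
qed

lemma Gs_vanish: "y \<in> Z2 \<Longrightarrow> a \<in> Z2 \<Longrightarrow> s \<in> Xhat \<Longrightarrow> y \<notin> Ea a \<Longrightarrow> Gs a s y = 0"
  unfolding Gs_def Ea_def using chi_vanish[of y a s] r01_neq[of s] by simp

lemma Gs_meas: "Gs a s \<in> borel_measurable haar"
  unfolding Gs_def
  by (intro borel_measurable_sum borel_measurable_times borel_measurable_const
        cnj_chi_meas)

lemma key_integral:
  assumes a: "a \<in> Z2" and s: "s \<in> Xhat" and f: "integrable haar (f :: z2 \<Rightarrow> complex)"
  shows "(\<integral>x. f (Tm a x) * cnj (chi s x) \<partial>haar) =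
         (\<Sum>r\<in>{r0 s, r1 s}. chi r (z2_neg a) * (\<integral>y. f y * cnj (chi r y) \<partial>haar))"
proof -
  have fm: "f \<in> borel_measurable haar" using borel_measurable_integrable[OF f] .
  define h where "h y = f y * Gs a s y / 2" for y
  have hm: "h \<in> borel_measurable MZ" unfolding h_def
    by (intro meas_MZ borel_measurable_divide borel_measurable_times fm Gs_meas borel_measurable_const)
  have gm: "(\<lambda>y. 2 * indicator (Ea a) y :: real) \<in> borel_measurable haar"
    using Ea_sets[of a] by (simp add: measurable_cong_sets[OF sets_haar refl])
  have "(\<integral>x. f (Tm a x) * cnj (chi s x) \<partial>haar) = (\<integral>x. h (Tm a x) \<partial>haar)"
  proof (rule integral_cong_AE)
    show "(\<lambda>x. h (Tm a x)) \<in> borel_measurable haar" by (rule measurable_compose[OF T_meas_haar hm])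
    show "(\<lambda>x. f (Tm a x) * cnj (chi s x)) \<in> borel_measurable haar"
      by (rule borel_measurable_times[OF measurable_compose[OF T_meas_haar meas_MZ[OF fm]] cnj_chi_meas])
    show "AE x in haar. f (Tm a x) * cnj (chi s x) = h (Tm a x)"
      using AE_Z2 by eventually_elim (simp add: h_def Gs_T[OF _ a s])
  qed
  also have "\<dots> = (\<integral>y. h y \<partial>distr haar MZ (Tm a))"
    by (rule integral_distr[symmetric, OF T_meas_haar hm])
  also have "\<dots> = (\<integral>y. h y \<partial>density haar (\<lambda>y. ennreal (2 * indicator (Ea a) y)))"
    using dens_eq[OF a] by simp
  also have "\<dots> = (\<integral>y. (2 * indicator (Ea a) y :: real) *\<^sub>R h y \<partial>haar)"
    by (rule integral_density) (use hm gm in \<open>auto simp: measurable_cong_sets[OF sets_haar refl]\<close>)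
  also have "\<dots> = (\<integral>y. f y * Gs a s y \<partial>haar)"
  proof (rule integral_cong_AE)
    show "AE y in haar. (2 * indicator (Ea a) y :: real) *\<^sub>R h y = f y * Gs a s y"
      using AE_Z2 by eventually_elim
        (auto simp: h_def indicator_def Gs_vanish[OF _ a s] scaleR_conv_of_real)
  qed (use hm gm fm in \<open>auto simp: measurable_cong_sets[OF sets_haar refl]
        intro!: borel_measurable_times borel_measurable_scaleR Gs_meas meas_MZ[OF Gs_meas]\<close>)
  also have "\<dots> = (\<integral>y. (\<Sum>r\<in>{r0 s, r1 s}. chi r (z2_neg a) * (f y * cnj (chi r y))) \<partial>haar)"
    unfolding Gs_def by (simp add: sum_distrib_left mult.commute mult.left_commute)
  also have "\<dots> = (\<Sum>r\<in>{r0 s, r1 s}. (\<integral>y. chi r (z2_neg a) * (f y * cnj (chi r y)) \<partial>haar))"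
    by (rule Bochner_Integration.integral_sum[where f="\<lambda>r y. chi r (z2_neg a) * (f y * cnj (chi r y))"])
       (auto intro!: integrable_mult_right integrable_mult_chi[OF f] cnj_chi_meas
          simp: norm_chi)
  also have "\<dots> = (\<Sum>r\<in>{r0 s, r1 s}. chi r (z2_neg a) * (\<integral>y. f y * cnj (chi r y) \<partial>haar))"
    by simp
  finally show ?thesis .
qed



definition Aj :: "nat \<Rightarrow> z2" where "Aj j = z2_mul (z2_const (int j)) z2_q"

lemma Aj_Z2[simp]: "Aj j \<in> Z2" by (simp add: Aj_def)

lemma Lop_eq: "Lop g = (\<lambda>x. \<Sum>j<3. coef j * g (Tm (Aj j) x))"
  by (simp add: fun_eq_iff Lop_def Tm_def Aj_def)

lemma Mfun_eq: "Mfun r = (\<Sum>j<3. coef j * chi r (z2_neg (Aj j)))"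
  by (simp add: Mfun_def Aj_def)

lemma Lop_integrable: "integrable haar g \<Longrightarrow> integrable haar (Lop g)"
  unfolding Lop_eq
  by (intro Bochner_Integration.integrable_sum integrable_mult_right integrable_T) auto

lemma Lop_pow_integrable: "integrable haar g \<Longrightarrow> integrable haar ((Lop ^^ k) g)"
  by (induction k) (auto intro: Lop_integrable)

lemma step:
  assumes g: "integrable haar g" and s: "s \<in> Xhat"
  shows "fourier (Lop g) s = (\<Sum>t\<in>{t \<in> Xhat. P t = s}. Mfun t * fourier g t)"
proof -
  have ig: "integrable haar (\<lambda>x. g (Tm (Aj j) x) * cnj (chi s x))" for j
    by (rule integrable_mult_chi[OF integrable_T[OF Aj_Z2 g] cnj_chi_meas]) (simp add: norm_chi)
  have "fourier (Lop g) s = (\<integral>x. (\<Sum>j<3. coef j * (g (Tm (Aj j) x) * cnj (chi s x))) \<partial>haar)"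
    unfolding fourier_def Lop_eq by (simp add: sum_distrib_right mult.assoc)
  also have "\<dots> = (\<Sum>j<3. (\<integral>x. coef j * (g (Tm (Aj j) x) * cnj (chi s x)) \<partial>haar))"
    by (rule Bochner_Integration.integral_sum[where f="\<lambda>j x. coef j * (g (Tm (Aj j) x) * cnj (chi s x))"])
       (auto intro: integrable_mult_right ig)
  also have "\<dots> = (\<Sum>j<3. coef j * (\<Sum>r\<in>{r0 s, r1 s}. chi r (z2_neg (Aj j)) * fourier g r))"
    by (simp add: key_integral[OF Aj_Z2 s g] fourier_def)
  also have "\<dots> = (\<Sum>r\<in>{r0 s, r1 s}. (\<Sum>j<3. coef j * chi r (z2_neg (Aj j))) * fourier g r)"
    by (simp add: sum_distrib_left sum_distrib_right mult.assoc sum.swap[where A="{..<3::nat}"])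
  also have "\<dots> = (\<Sum>t\<in>{t \<in> Xhat. P t = s}. Mfun t * fourier g t)"
    by (simp add: preimage[OF s] Mfun_eq)
  finally show ?thesis .
qed

lemma Pk_Xhat: "r \<in> Xhat \<Longrightarrow> (P ^^ k) r \<in> Xhat"
  by (induction k) (auto intro: P_Xhat)

lemma Mk_Suc: "Mk (Suc k) r = Mk k r * Mfun ((P ^^ k) r)"
  by (simp add: Mk_def)

lemma main:
  assumes d: "integrable haar \<delta>"
  shows "s \<in> Xhat \<Longrightarrow> finite {r \<in> Xhat. (P ^^ k) r = s} \<and>
         fourier ((Lop ^^ k) \<delta>) s = (\<Sum>r \<in> {r \<in> Xhat. (P ^^ k) r = s}. Mk k r * fourier \<delta> r)"
proof (induction k arbitrary: s)
  case 0
  then have "{r \<in> Xhat. (P ^^ 0) r = s} = {s}" by auto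
  then show ?case by (simp add: Mk_def)
next
  case (Suc k)
  define B where "B t = {r \<in> Xhat. (P ^^ k) r = t}" for t
  define R where "R = {t \<in> Xhat. P t = s}"
  have R: "R = {r0 s, r1 s}" using preimage[OF Suc.prems] R_def by simp
  have finR: "finite R" using R by simp
  have U: "{r \<in> Xhat. (P ^^ Suc k) r = s} = (\<Union>t\<in>R. B t)"
    unfolding B_def R_def using Pk_Xhat by auto
  have finB: "\<forall>t\<in>R. finite (B t)" using Suc.IH R_def B_def by auto
  have disj: "\<forall>t\<in>R. \<forall>t'\<in>R. t \<noteq> t' \<longrightarrow> B t \<inter> B t' = {}" unfolding B_def by auto
  have "fourier ((Lop ^^ Suc k) \<delta>) s = fourier (Lop ((Lop ^^ k) \<delta>)) s" by simp
  also have "\<dots> = (\<Sum>t\<in>R. Mfun t * fourier ((Lop ^^ k) \<delta>) t)"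
    unfolding R_def by (rule step[OF Lop_pow_integrable[OF d] Suc.prems])
  also have "\<dots> = (\<Sum>t\<in>R. Mfun t * (\<Sum>r\<in>B t. Mk k r * fourier \<delta> r))"
    using Suc.IH unfolding R_def B_def by (intro sum.cong) auto
  also have "\<dots> = (\<Sum>t\<in>R. (\<Sum>r\<in>B t. Mk (Suc k) r * fourier \<delta> r))"
    unfolding sum_distrib_left
    by (intro sum.cong refl) (auto simp: Mk_Suc B_def)
  also have "\<dots> = (\<Sum>r\<in>(\<Union>t\<in>R. B t). Mk (Suc k) r * fourier \<delta> r)"
    by (rule sum.UNION_disjoint[OF finR finB disj, symmetric])
  finally show ?case using U finR finB by simp
qed

lemma L2_integrable:
  assumes m: "\<delta> \<in> borel_measurable haar" and i: "integrable haar (\<lambda>x. (cmod (\<delta> x))\<^sup>2)"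
  shows "integrable haar \<delta>"
proof (rule Bochner_Integration.integrable_bound[where f="\<lambda>x. 1 + (cmod (\<delta> x))\<^sup>2"])
  show "integrable haar (\<lambda>x. 1 + (cmod (\<delta> x))\<^sup>2)"
    using i prob_space.finite_measure[OF prob_haar]
    by (intro Bochner_Integration.integrable_add finite_measure.integrable_const) auto
  show "\<delta> \<in> borel_measurable haar" by fact
  have "cmod z \<le> 1 + (cmod z)\<^sup>2" for z
  proof (cases "cmod z \<le> 1")
    case True
    have "0 \<le> (cmod z)\<^sup>2" by simp
    then show ?thesis using True by linarith
  next
    case False then have "1 * cmod z \<le> cmod z * cmod z" by (intro mult_right_mono) auto
    then show ?thesis by (simp add: power2_eq_square)
  qed
  then show "AE x in haar. norm (\<delta> x) \<le> norm (1 + (cmod (\<delta> x))\<^sup>2)" by simp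
qed

theorem lemma23:
  fixes \<delta> :: "z2 \<Rightarrow> complex" and k :: nat and s :: rat
  assumes "\<delta> \<in> borel_measurable haar"
    and "integrable haar (\<lambda>x. (cmod (\<delta> x))\<^sup>2)"
    and "k \<ge> 1"
    and "s \<in> Xhat"
  shows "finite {r \<in> Xhat. (Pmap z2_2q ^^ k) r = s} \<and>
         fourier ((Lop ^^ k) \<delta>) s =
           (\<Sum>r \<in> {r \<in> Xhat. (Pmap z2_2q ^^ k) r = s}. Mk k r * fourier \<delta> r)"
  using main[OF L2_integrable[OF assms(1,2)] assms(4)] .

end
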